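(* Let $G$ be a graph with $m\ge 1$ edges and let $a_1<a_2<\cdots<a_m$ be positive integers. Then there exist an orientation $D$ of $G$ and a bijection $\tau:A(D)\to\{a_1,\dots,a_m\}$ such that $s_{(D,\tau)}(v)\ge -a_m$ for every vertex $v\in V(G)$.
   Context: All graphs are finite and simple. An orientation $D$ of $G$ assigns to each edge one direction; $A(D)$ is its arc set. For an injective map $\tau$ from $A(D)$ to a set of positive integers and a vertex $u$, $s_{(D,\tau)}(u)$ is the sum of $\tau$-labels of all arcs entering $u$ minus the sum of $\tau$-labels of all arcs leaving $u$, with $s_{(D,\tau)}(u)=0$ if $u$ is isolated. *)

theory Defs
  imports Main
begin

definition simple_graph :: "'a set \<Rightarrow> 'a set set \<Rightarrow> bool" where
  "simple_graph V E \<longleftrightarrow> finite V \<and> (\<forall>e\<in>E. e \<subseteq> V \<and> card e = 2)"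

definition is_orientation :: "'a set set \<Rightarrow> ('a \<times> 'a) set \<Rightarrow> bool" where
  "is_orientation E A \<longleftrightarrow>
     (\<forall>(u,v)\<in>A. {u,v} \<in> E) \<and>
     (\<forall>e\<in>E. \<exists>!p. p \<in> A \<and> {fst p, snd p} = e)"

definition arc_sum :: "('a \<times> 'a) set \<Rightarrow> ('a \<times> 'a \<Rightarrow> int) \<Rightarrow> 'a \<Rightarrow> int" where
  "arc_sum A \<tau> u = (\<Sum>p\<in>{p\<in>A. snd p = u}. \<tau> p) - (\<Sum>p\<in>{p\<in>A. fst p = u}. \<tau> p)"

end

theory Submission
  imports Defs
begin

lemma bij_upd:
  assumes "bij_betw f A B" "x \<notin> A" "y \<notin> B"
  shows "bij_betw (f(x := y)) (insert x A) (insert y B)"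
proof -
  have i: "inj_on f A" and im: "f ` A = B" using assms(1) by (auto simp: bij_betw_def)
  have e: "(f(x:=y)) ` A = f ` A" using assms(2) by (intro image_cong) auto
  have "inj_on (f(x:=y)) A" using i assms(2) by (auto simp: inj_on_def)
  moreover have "(f(x:=y)) x \<notin> (f(x:=y)) ` (A - {x})" using e im assms(2,3) by simp
  ultimately have "inj_on (f(x:=y)) (insert x A)" by simp
  moreover have "(f(x:=y)) ` insert x A = insert y B" by (simp only: image_insert e im fun_upd_same)
  ultimately show ?thesis unfolding bij_betw_def by simp
qed

lemma arc_sum_insert:
  assumes "finite A" "(u,x) \<notin> A" "u \<noteq> x"
  shows "arc_sum (insert (u,x) A) (\<tau>((u,x) := c)) v =
         arc_sum A \<tau> v + (if v = x then c else 0) - (if v = u then c else 0)"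
proof -
  have s1: "(\<Sum>p\<in>{p\<in>insert (u,x) A. snd p = v}. (\<tau>((u,x) := c)) p) =
        (\<Sum>p\<in>{p\<in>A. snd p = v}. \<tau> p) + (if v = x then c else 0)"
  proof (cases "v = x")
    case True
    then have "{p\<in>insert (u,x) A. snd p = v} = insert (u,x) {p\<in>A. snd p = v}" by auto
    moreover have "(\<Sum>p\<in>{p\<in>A. snd p = v}. (\<tau>((u,x) := c)) p) = (\<Sum>p\<in>{p\<in>A. snd p = v}. \<tau> p)"
      using assms by (intro sum.cong) auto
    ultimately show ?thesis using assms True by simp
  next
    case False
    then have "{p\<in>insert (u,x) A. snd p = v} = {p\<in>A. snd p = v}" by auto
    moreover have "(\<Sum>p\<in>{p\<in>A. snd p = v}. (\<tau>((u,x) := c)) p) = (\<Sum>p\<in>{p\<in>A. snd p = v}. \<tau> p)"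
      using assms by (intro sum.cong) auto
    ultimately show ?thesis using False by simp
  qed
  have s2: "(\<Sum>p\<in>{p\<in>insert (u,x) A. fst p = v}. (\<tau>((u,x) := c)) p) =
        (\<Sum>p\<in>{p\<in>A. fst p = v}. \<tau> p) + (if v = u then c else 0)"
  proof (cases "v = u")
    case True
    then have "{p\<in>insert (u,x) A. fst p = v} = insert (u,x) {p\<in>A. fst p = v}" by auto
    moreover have "(\<Sum>p\<in>{p\<in>A. fst p = v}. (\<tau>((u,x) := c)) p) = (\<Sum>p\<in>{p\<in>A. fst p = v}. \<tau> p)"
      using assms by (intro sum.cong) auto
    ultimately show ?thesis using assms True by simp
  next
    case False
    then have "{p\<in>insert (u,x) A. fst p = v} = {p\<in>A. fst p = v}" by auto
    moreover have "(\<Sum>p\<in>{p\<in>A. fst p = v}. (\<tau>((u,x) := c)) p) = (\<Sum>p\<in>{p\<in>A. fst p = v}. \<tau> p)"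
      using assms by (intro sum.cong) auto
    ultimately show ?thesis using False by simp
  qed
  show ?thesis unfolding arc_sum_def s1 s2 by simp
qed

lemma arc_sum_isolated:
  assumes "is_orientation E A" "\<forall>e\<in>E. v \<notin> e"
  shows "arc_sum A \<tau> v = 0"
proof -
  have h: "{p\<in>A. snd p = v} = {}" "{p\<in>A. fst p = v} = {}"
    using assms unfolding is_orientation_def by fastforce+
  show ?thesis unfolding arc_sum_def h(1) h(2) by (simp only: sum.empty diff_self)
qed

lemma orient_insert:
  assumes "is_orientation (E - {{u,x}}) A" "{u,x} \<in> E"
  shows "is_orientation E (insert (u,x) A)" "(u,x) \<notin> A"
proof -
  have A1: "\<forall>(p,q)\<in>A. {p,q} \<in> E - {{u,x}}" using assms(1) unfolding is_orientation_def by (rule conjunct1)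
  have A2: "\<forall>e\<in>E - {{u,x}}. \<exists>!p. p \<in> A \<and> {fst p, snd p} = e" using assms(1) unfolding is_orientation_def by (rule conjunct2)
  show "(u,x) \<notin> A" using A1 by auto
  show "is_orientation E (insert (u,x) A)"
    unfolding is_orientation_def
  proof (intro conjI)
    show "\<forall>(p,q)\<in>insert (u,x) A. {p,q} \<in> E" using A1 assms(2) by auto
  next
   show "\<forall>e\<in>E. \<exists>!p. p \<in> insert (u,x) A \<and> {fst p, snd p} = e"
   proof
    fix e assume e: "e \<in> E"
    show "\<exists>!p. p \<in> insert (u,x) A \<and> {fst p, snd p} = e"
    proof (cases "e = {u,x}")
      case True
      show ?thesis
      proof (rule ex1I[of _ "(u,x)"])
        show "(u,x) \<in> insert (u,x) A \<and> {fst (u,x), snd (u,x)} = e" using True by simp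
      next
        fix p assume "p \<in> insert (u,x) A \<and> {fst p, snd p} = e"
        then show "p = (u,x)" using A1 True by (cases p) auto
      qed
    next
      case False
      have "e \<in> E - {{u,x}}" using e False by simp
      then have "\<exists>!p. p \<in> A \<and> {fst p, snd p} = e" using A2 by (rule bspec[rotated])
      then obtain p where p12: "p \<in> A \<and> {fst p, snd p} = e" and
        p3': "\<forall>q. q \<in> A \<and> {fst q, snd q} = e \<longrightarrow> q = p" by (rule ex1E)
      have p3: "\<And>q. q \<in> A \<and> {fst q, snd q} = e \<Longrightarrow> q = p" by (rule mp[OF spec[OF p3']])
      have p: "p \<in> A" "{fst p, snd p} = e" using p12 by (rule conjunct1, rule conjunct2)
      show ?thesis
      proof (rule ex1I[of _ p])
        show "p \<in> insert (u,x) A \<and> {fst p, snd p} = e" using p by simp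
      next
        fix q assume "q \<in> insert (u,x) A \<and> {fst q, snd q} = e"
        then have "q \<in> A \<and> {fst q, snd q} = e" using False by auto
        then show "q = p" by (rule p3)
      qed
    qed
   qed
  qed
qed

lemma main:
  fixes a :: "nat \<Rightarrow> int"
  assumes "finite E" "card E = n" "\<forall>e\<in>E. card e = 2"
    and "\<forall>i\<in>{1..n}. a i > 0"
    and "\<forall>i j. 1 \<le> i \<and> i < j \<and> j \<le> n \<longrightarrow> a i < a j"
  shows "\<exists>A \<tau>. is_orientation E A \<and> bij_betw \<tau> A (a ` {1..n}) \<and>
           (\<forall>v. arc_sum A \<tau> v \<ge> - (if n = 0 then 0 else a n)) \<and> arc_sum A \<tau> w \<ge> 0"
  using assms
proof (induction n arbitrary: E w)
  case 0
  then have "E = {}" by simp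
  then show ?case
    by (intro exI[of _ "{}"] exI[of _ "\<lambda>_. 0"]) (simp add: is_orientation_def arc_sum_def bij_betw_def)
next
  case (Suc n)
  have "\<exists>u x. {u,x} \<in> E \<and> u \<noteq> x \<and> w \<noteq> u \<and> ((\<exists>e\<in>E. w \<in> e) \<longrightarrow> w = x)"
  proof (cases "\<exists>e\<in>E. w \<in> e")
    case True
    then obtain e where e: "e \<in> E" "w \<in> e" by blast
    then obtain p q where "e = {p,q}" "p \<noteq> q" using Suc.prems(3) card_2_iff by metis
    then show ?thesis using e by (metis insert_commute empty_iff insert_iff)
  next
    case False
    have "E \<noteq> {}" using Suc.prems(2) by auto
    then obtain e where e: "e \<in> E" by blast
    then obtain p q where "e = {p,q}" "p \<noteq> q" using Suc.prems(3) card_2_iff by metis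
    then show ?thesis using e False by blast
  qed
  then obtain u x where ux: "{u,x} \<in> E" "u \<noteq> x" "w \<noteq> u" "(\<exists>e\<in>E. w \<in> e) \<longrightarrow> w = x" by blast
  let ?E = "E - {{u,x}}"
  have cE: "card ?E = n" using Suc.prems(1,2) ux(1) by simp
  obtain A \<tau> where IH: "is_orientation ?E A" "bij_betw \<tau> A (a ` {1..n})"
    "\<forall>v. arc_sum A \<tau> v \<ge> - (if n = 0 then 0 else a n)" "arc_sum A \<tau> u \<ge> 0"
    using Suc.IH[of ?E u] Suc.prems cE by auto
  have or: "is_orientation E (insert (u,x) A)" "(u,x) \<notin> A" using orient_insert[OF IH(1) ux(1)] by auto
  have finA: "finite A" using IH(2) bij_betw_finite by blast
  have notin: "a (Suc n) \<notin> a ` {1..n}"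
  proof
    assume "a (Suc n) \<in> a ` {1..n}"
    then obtain i where "i \<in> {1..n}" "a (Suc n) = a i" by auto
    moreover have "a i < a (Suc n)" using Suc.prems(5) \<open>i \<in> {1..n}\<close> by auto
    ultimately show False by simp
  qed
  have img: "a ` {1..Suc n} = insert (a (Suc n)) (a ` {1..n})"
    by (auto simp: atLeastAtMostSuc_conv)
  have bij: "bij_betw (\<tau>((u,x) := a (Suc n))) (insert (u,x) A) (a ` {1..Suc n})"
    unfolding img by (rule bij_upd[OF IH(2) or(2) notin])
  have bn: "(if n = 0 then 0 else a n) \<le> a (Suc n)"
    using Suc.prems(4) Suc.prems(5)[rule_format, of n "Suc n"] by (cases "n = 0") auto
  have S: "\<And>v. arc_sum (insert (u,x) A) (\<tau>((u,x) := a (Suc n))) v =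
         arc_sum A \<tau> v + (if v = x then a (Suc n) else 0) - (if v = u then a (Suc n) else 0)"
    by (rule arc_sum_insert[OF finA or(2) ux(2)])
  have pos: "a (Suc n) > 0" using Suc.prems(4) by auto
  have all: "\<forall>v. arc_sum (insert (u,x) A) (\<tau>((u,x) := a (Suc n))) v \<ge> - a (Suc n)"
  proof
    fix v
    show "arc_sum (insert (u,x) A) (\<tau>((u,x) := a (Suc n))) v \<ge> - a (Suc n)"
      unfolding S using IH(3,4) bn pos ux(2) by (smt (verit))
  qed
  have wpos: "arc_sum (insert (u,x) A) (\<tau>((u,x) := a (Suc n))) w \<ge> 0"
  proof (cases "w = x")
    case True
    then show ?thesis unfolding S using IH(3) bn ux(2) by (smt (verit))
  next
    case False
    then have "w \<notin> {u,x}" using ux by auto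
    have "\<forall>e\<in>?E. w \<notin> e" using ux(4) False by blast
    then have "arc_sum A \<tau> w = 0" using arc_sum_isolated[OF IH(1)] by blast
    then show ?thesis unfolding S using \<open>w \<notin> {u,x}\<close> by simp
  qed
  have all': "\<forall>v. - (if Suc n = 0 then 0 else a (Suc n)) \<le> arc_sum (insert (u,x) A) (\<tau>((u,x) := a (Suc n))) v"
    using all by simp
  show ?case
    apply (rule exI[where x="insert (u,x) A"])
    apply (rule exI[where x="\<tau>((u,x) := a (Suc n))"])
    apply (intro conjI)
       apply (rule or(1))
      apply (rule bij)
     apply (rule all')
    apply (rule wpos)
    done
qed

theorem lemma2p1:
  fixes V :: "'v set" and E :: "'v set set" and a :: "nat \<Rightarrow> int" and m :: nat
  assumes "simple_graph V E"
    and "card E = m" and "m \<ge> 1"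
    and "\<forall>i\<in>{1..m}. a i > 0"
    and "\<forall>i j. 1 \<le> i \<and> i < j \<and> j \<le> m \<longrightarrow> a i < a j"
  shows "\<exists>A \<tau>. is_orientation E A \<and> bij_betw \<tau> A (a ` {1..m}) \<and>
           (\<forall>v\<in>V. arc_sum A \<tau> v \<ge> - a m)"
proof -
  have f: "finite E" by (rule card_ge_0_finite) (use assms(2,3) in simp)
  have c: "\<forall>e\<in>E. card e = 2" using assms(1) unfolding simple_graph_def by blast
  obtain A \<tau> where "is_orientation E A" "bij_betw \<tau> A (a ` {1..m})"
    "\<forall>v. arc_sum A \<tau> v \<ge> - (if m = 0 then 0 else a m)"
    using main[OF f assms(2) c assms(4,5), of undefined] by blast
  then show ?thesis using assms(3) by auto
qed

end
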